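(* Let $f$, $g$, $\xi$, $F$ satisfy the standing assumptions below, and let $x$ be the unique continuous solution of $x'(t)=-f(x(t))+g(t)$, $t>0$, $x(0)=\xi$. Suppose there exist $\delta>0$ and a function $\phi$ increasing on $(0,\delta)$ with $\lim_{x\to0^+}f(x)/\phi(x)=1$, and suppose there is $L\in(0,\infty)$ with \[ \lim_{t\to\infty}\frac{g(t)}{f(F^{-1}(t))}=L. \] Then $x(t)\to0$ as $t\to\infty$. Moreover: (i) if $f\in\mathrm{RV}_0(\beta)$ for some $\beta>1$, then $\lim_{t\to\infty}F(x(t))/t=\Lambda_*$, where $\Lambda_*\in(0,1)$ is the unique solution of $(1-\Lambda_* )\Lambda_*^{-\beta/(\beta-1)}=L$; (ii) if $f\circ F^{-1}\in\mathrm{RV}_\infty(-1)$ and $F^{-1}\in\mathrm{RV}_\infty(0)$, then $\lim_{t\to\infty}F(x(t))/t=\Lambda_*=1/(L+1)\in(0,1)$.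
   Context: Standing assumptions: $f\in C(\mathbb{R};\mathbb{R})$ is locally Lipschitz continuous on $\mathbb{R}$, $f(0)=0$ and $xf(x)>0$ for $x\neq0$; $g\in C([0,\infty);\mathbb{R})$ with $g(t)>0$ for $t>0$; $\xi>0$. $F(x)=\int_x^1 \frac{du}{f(u)}$ for $x>0$, with $\lim_{x\to0^+}F(x)=+\infty$; $F^{-1}$ is the inverse of the strictly decreasing function $F$. A measurable $\varphi:(0,\infty)\to(0,\infty)$ is in $\mathrm{RV}_0(\beta)$ if $\lim_{x\to0^+}\varphi(\lambda x)/\varphi(x)=\lambda^\beta$ for all $\lambda>0$ (applied to $f$ restricted to $(0,\infty)$, where $f>0$). A measurable positive $h$ is in $\mathrm{RV}_\infty(\alpha)$ if $\lim_{t\to\infty}h(\lambda t)/h(t)=\lambda^\alpha$ for all $\lambda>0$. *)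

theory Defs
  imports "HOL-Analysis.Analysis"
begin

definition Fint :: "(real \<Rightarrow> real) \<Rightarrow> real \<Rightarrow> real" where
  "Fint f x = (if x \<le> 1 then integral {x..1} (\<lambda>u. 1 / f u)
               else - integral {1..x} (\<lambda>u. 1 / f u))"

definition Finv :: "(real \<Rightarrow> real) \<Rightarrow> real \<Rightarrow> real" where
  "Finv f t = (THE y. y > 0 \<and> Fint f y = t)"

definition loc_lipschitz :: "(real \<Rightarrow> real) \<Rightarrow> bool" where
  "loc_lipschitz f \<longleftrightarrow> (\<forall>x. \<exists>U. open U \<and> x \<in> U \<and> (\<exists>C. C-lipschitz_on U f))"

definition RV0 :: "(real \<Rightarrow> real) \<Rightarrow> real \<Rightarrow> bool" where
  "RV0 \<phi> \<beta> \<longleftrightarrow> (\<forall>x>0. \<phi> x > 0) \<and>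
     (\<forall>c>0. ((\<lambda>x. \<phi> (c * x) / \<phi> x) \<longlongrightarrow> c powr \<beta>) (at_right 0))"

definition RVinf :: "(real \<Rightarrow> real) \<Rightarrow> real \<Rightarrow> bool" where
  "RVinf h \<alpha> \<longleftrightarrow> (\<forall>\<^sub>F t in at_top. h t > 0) \<and>
     (\<forall>c>0. ((\<lambda>t. h (c * t) / h t) \<longlongrightarrow> c powr \<alpha>) at_top)"

end

theory Submission
  imports Defs
begin
lemma first_hit:
  fixes w :: "real \<Rightarrow> real"
  assumes cont: "continuous_on {a..b} w" and wa: "w a < 0" and wb: "w b \<ge> 0" and ab: "a \<le> b"
  shows "\<exists>s. a < s \<and> s \<le> b \<and> w s \<ge> 0 \<and> (\<forall>t. a \<le> t \<and> t < s \<longrightarrow> w t < 0)"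
proof -
  define S where "S = {t \<in> {a..b}. 0 \<le> w t}"
  have cl: "closed S" unfolding S_def
    by (rule continuous_on_closed_Collect_le[OF continuous_on_const cont]) simp
  have ne: "S \<noteq> {}" using wb ab by (auto simp: S_def)
  have bdd: "bdd_below S" unfolding S_def by (rule bdd_belowI[of _ a]) auto
  define s where "s = Inf S"
  have sS: "s \<in> S" unfolding s_def by (rule closed_contains_Inf[OF ne bdd cl])
  have "\<forall>t. a \<le> t \<and> t < s \<longrightarrow> w t < 0"
  proof (intro allI impI)
    fix t assume t: "a \<le> t \<and> t < s"
    show "w t < 0"
    proof (rule ccontr)
      assume "\<not> w t < 0"
      then have "t \<in> S" using t sS by (auto simp: S_def)
      then have "s \<le> t" unfolding s_def using bdd by (rule cInf_lower)
      with t show False by simp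
    qed
  qed
  moreover have "a < s" using sS wa by (cases "s = a") (auto simp: S_def)
  ultimately show ?thesis using sS by (auto simp: S_def)
qed

lemma barrier:
  fixes w w' :: "real \<Rightarrow> real"
  assumes c: "c > 0"
    and der: "\<And>t. t \<ge> T \<Longrightarrow> (w has_real_derivative w' t) (at t)"
    and neg: "\<And>t. t \<ge> T \<Longrightarrow> w t \<ge> 0 \<Longrightarrow> w' t \<le> -c"
  shows "\<exists>T'. \<forall>t\<ge>T'. w t < 0"
proof -
  have "\<exists>t1\<ge>T. w t1 < 0"
  proof (rule ccontr)
    assume "\<not> ?thesis"
    then have pos: "\<And>t. t \<ge> T \<Longrightarrow> w t \<ge> 0" by force
    define t2 where "t2 = T + (\<bar>w T\<bar> + 1) / c"
    have "T \<le> t2" using c by (simp add: t2_def)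
    have "(\<lambda>t. w t + c * t) t2 \<le> (\<lambda>t. w t + c * t) T"
    proof (rule DERIV_nonpos_imp_nonincreasing[OF \<open>T \<le> t2\<close>])
      fix t assume "T \<le> t" "t \<le> t2"
      then show "\<exists>y. ((\<lambda>t. w t + c * t) has_real_derivative y) (at t) \<and> y \<le> 0"
        using neg[of t] pos[of t] der[of t]
        by (intro exI[of _ "w' t + c"]) (auto intro!: derivative_eq_intros)
    qed
    then have "w t2 \<le> w T - c * (t2 - T)" by (simp add: algebra_simps)
    also have "c * (t2 - T) = \<bar>w T\<bar> + 1" using c by (simp add: t2_def)
    finally have "w t2 < 0" by linarith
    with pos[OF \<open>T \<le> t2\<close>] show False by simp
  qed
  then obtain t1 where t1: "t1 \<ge> T" "w t1 < 0" by auto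
  have "\<forall>t\<ge>t1. w t < 0"
  proof (intro allI impI, rule ccontr)
    fix t2 assume t2: "t1 \<le> t2" "\<not> w t2 < 0"
    have cont: "continuous_on {t1..t2} w"
    proof (intro continuous_at_imp_continuous_on ballI)
      fix u assume "u \<in> {t1..t2}"
      then show "isCont w u" using der[of u] t1 by (auto intro: DERIV_isCont)
    qed
    obtain s where s: "t1 < s" "s \<le> t2" "w s \<ge> 0" "\<And>t. t1 \<le> t \<Longrightarrow> t < s \<Longrightarrow> w t < 0"
      using first_hit[OF cont t1(2) _ t2(1)] t2 by force
    have "w' s < 0" using neg[of s] s t1 c by force
    from DERIV_neg_dec_left[OF der[of s] this] s t1 obtain d where d: "d > 0" "\<And>h. h > 0 \<Longrightarrow> h < d \<Longrightarrow> w s < w (s - h)"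
      by force
    define h where "h = min d (s - t1) / 2"
    have "h > 0" "h < d" "h \<le> s - t1" using d s by (auto simp: h_def)
    then have "w s < w (s - h)" using d by auto
    moreover have "w (s - h) < 0" using s \<open>h > 0\<close> \<open>h \<le> s - t1\<close> by auto
    ultimately show False using s by linarith
  qed
  then show ?thesis by auto
qed

locale Fsetup =
  fixes f :: "real \<Rightarrow> real"
  assumes f_cont: "continuous_on UNIV f"
    and f0: "f 0 = 0"
    and f_sign: "\<And>y. y \<noteq> 0 \<Longrightarrow> y * f y > 0"
    and F_lim: "filterlim (Fint f) at_top (at_right 0)"
begin

lemma f_pos: "y > 0 \<Longrightarrow> f y > 0"
  using f_sign[of y] by (simp add: zero_less_mult_iff)

lemma f_neg: "y < 0 \<Longrightarrow> f y < 0"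
  using f_sign[of y] by (simp add: zero_less_mult_iff)

lemma cont_inv_f: "0 < a \<Longrightarrow> continuous_on {a..b} (\<lambda>u. 1 / f u)"
proof -
  assume a: "0 < a"
  have "\<And>u. u \<in> {a..b} \<Longrightarrow> f u \<noteq> 0"
  proof -
    fix u assume "u \<in> {a..b}"
    then have "u > 0" using a by simp
    then show "f u \<noteq> 0" using f_pos[of u] by simp
  qed
  then show ?thesis
    by (intro continuous_intros continuous_on_subset[OF f_cont]) auto
qed

lemma int_inv_f: "0 < a \<Longrightarrow> (\<lambda>u. 1 / f u) integrable_on {a..b}"
  by (rule integrable_continuous_real[OF cont_inv_f])

lemma F_split:
  assumes a: "0 < a" "a \<le> y"
  shows "Fint f y = Fint f a - integral {a..y} (\<lambda>u. 1 / f u)"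
proof (cases "y \<le> 1")
  case True
  have "integral {a..y} (\<lambda>u. 1 / f u) + integral {y..1} (\<lambda>u. 1 / f u) = integral {a..1} (\<lambda>u. 1 / f u)"
    by (rule Henstock_Kurzweil_Integration.integral_combine) (use a True in \<open>auto intro!: int_inv_f\<close>)
  then show ?thesis using a True by (simp add: Fint_def)
next
  case False
  show ?thesis
  proof (cases "a \<le> 1")
    case True
    have "integral {a..1} (\<lambda>u. 1 / f u) + integral {1..y} (\<lambda>u. 1 / f u) = integral {a..y} (\<lambda>u. 1 / f u)"
      by (rule Henstock_Kurzweil_Integration.integral_combine) (use a True False in \<open>auto intro!: int_inv_f\<close>)
    then show ?thesis using a True False by (simp add: Fint_def)
  next
    case a1: False
    have "integral {1..a} (\<lambda>u. 1 / f u) + integral {a..y} (\<lambda>u. 1 / f u) = integral {1..y} (\<lambda>u. 1 / f u)"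
      by (rule Henstock_Kurzweil_Integration.integral_combine) (use a a1 False in \<open>auto intro!: int_inv_f\<close>)
    then show ?thesis using a a1 False by (simp add: Fint_def)
  qed
qed

lemma F_deriv:
  assumes y: "y > 0"
  shows "(Fint f has_real_derivative (- (1 / f y))) (at y)"
proof -
  define a where "a = y / 2"
  define b where "b = 2 * y"
  have ab: "0 < a" "a < y" "y < b" using y by (auto simp: a_def b_def)
  have "((\<lambda>z. integral {a..z} (\<lambda>u. 1 / f u)) has_real_derivative 1 / f y) (at y within {a..b})"
    using ab by (intro integral_has_real_derivative cont_inv_f) auto
  then have "((\<lambda>z. integral {a..z} (\<lambda>u. 1 / f u)) has_real_derivative 1 / f y) (at y)"
    using ab by (simp add: at_within_Icc_at)
  then have "((\<lambda>z. Fint f a - integral {a..z} (\<lambda>u. 1 / f u)) has_real_derivative - (1 / f y)) (at y)"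
    by (intro derivative_eq_intros) auto
  then show ?thesis
    by (rule has_field_derivative_transform_within_open[where S="{a<..<b}"])
       (use ab in \<open>auto intro: F_split[symmetric]\<close>)
qed

lemma F_isCont: "y > 0 \<Longrightarrow> isCont (Fint f) y"
  by (rule DERIV_isCont[OF F_deriv])

lemma F_strict: assumes "0 < y" "y < z" shows "Fint f z < Fint f y"
proof (rule DERIV_neg_imp_decreasing[OF assms(2)])
  fix u assume "y \<le> u" "u \<le> z"
  then have "u > 0" using assms by auto
  then show "\<exists>d. (Fint f has_real_derivative d) (at u) \<and> d < 0"
    using F_deriv[of u] f_pos[of u] by auto
qed

lemma F_less_iff: assumes "0 < y" "0 < z" shows "Fint f z < Fint f y \<longleftrightarrow> y < z"
proof
  assume "y < z" then show "Fint f z < Fint f y" using F_strict assms by blast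
next
  assume h: "Fint f z < Fint f y"
  show "y < z"
  proof (rule ccontr)
    assume "\<not> y < z"
    then have "z = y \<or> z < y" by auto
    then show False using F_strict[of z y] assms h by auto
  qed
qed

lemma F_le_iff: "0 < y \<Longrightarrow> 0 < z \<Longrightarrow> Fint f z \<le> Fint f y \<longleftrightarrow> y \<le> z"
  using F_less_iff[of z y] by auto

lemma F_inj: assumes "0 < y" "0 < z" shows "Fint f z = Fint f y \<longleftrightarrow> y = z"
  using F_less_iff[OF assms] F_less_iff[OF assms(2,1)] by (metis less_irrefl linorder_neqE_linordered_idom)

lemma F_1: "Fint f 1 = 0" by (simp add: Fint_def)

lemma F_onto: assumes "t \<ge> 0" shows "\<exists>y>0. Fint f y = t"
proof -
  have "eventually (\<lambda>y. Fint f y > t) (at_right 0)"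
    using F_lim by (simp add: filterlim_at_top_dense)
  then obtain b where b: "b > 0" "\<And>y. 0 < y \<Longrightarrow> y < b \<Longrightarrow> Fint f y > t"
    by (auto simp: eventually_at_right_field)
  define y0 where "y0 = min (b/2) 1"
  have y0: "0 < y0" "y0 \<le> 1" "Fint f y0 > t" using b by (auto simp: y0_def)
  have "\<exists>y. y0 \<le> y \<and> y \<le> 1 \<and> Fint f y = t"
    using y0 assms by (intro IVT2) (auto simp: F_1 intro!: F_isCont)
  then obtain y where "y0 \<le> y" "Fint f y = t" by blast
  then show ?thesis using y0 by (intro exI[of _ y]) auto
qed

lemma Finv_F: "y > 0 \<Longrightarrow> Finv f (Fint f y) = y"
  unfolding Finv_def by (rule the_equality) (auto simp: F_inj)

lemma Finv_pos: "t \<ge> 0 \<Longrightarrow> Finv f t > 0"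
  using F_onto[of t] Finv_F by force

lemma F_Finv: "t \<ge> 0 \<Longrightarrow> Fint f (Finv f t) = t"
  using F_onto[of t] Finv_F by force

lemma Finv_mono: assumes "0 \<le> s" "s \<le> t" shows "Finv f t \<le> Finv f s"
  using F_le_iff[of "Finv f t" "Finv f s"] Finv_pos F_Finv assms by auto

lemma Finv_at_right: "filterlim (Finv f) (at_right 0) at_top"
proof -
  have "eventually (\<lambda>t. Finv f t < e) at_top" if e: "e > 0" for e
  proof -
    have "eventually (\<lambda>t. t > max 0 (Fint f e)) at_top" by (rule eventually_gt_at_top)
    then show ?thesis
    proof eventually_elim
      case (elim t)
      then have "Fint f e < Fint f (Finv f t)" using F_Finv by auto
      then show ?case using F_less_iff[of "Finv f t" e] Finv_pos[of t] elim e by auto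
    qed
  qed
  moreover have "eventually (\<lambda>t. Finv f t > 0) at_top"
    using eventually_ge_at_top[of 0] by eventually_elim (rule Finv_pos)
  ultimately show ?thesis
    by (intro tendsto_imp_filterlim_at_right order_tendstoI) (auto elim: eventually_mono)
qed

lemma Finv_deriv:
  assumes t: "t > 0"
  shows "(Finv f has_real_derivative (- f (Finv f t))) (at t)"
proof -
  let ?y = "Finv f t"
  have y: "?y > 0" using Finv_pos t by auto
  have cont: "isCont (Finv f) (Fint f ?y)"
    by (rule isCont_inverse_function2[where a="?y/2" and b="?y+1"])
       (use y in \<open>auto intro!: F_isCont Finv_F\<close>)
  have "(Finv f has_real_derivative inverse (- (1 / f ?y))) (at t)"
    by (rule DERIV_inverse_function[where a=0 and b="t+1" and g="Finv f" and x=t, OF F_deriv[OF y]])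
       (use t y f_pos[OF y] cont F_Finv in auto)
  then show ?thesis using f_pos[OF y] by simp
qed

end

locale ode = Fsetup f for f +
  fixes g x \<phi> :: "real \<Rightarrow> real" and \<xi> \<delta> L :: real
  assumes g_pos: "\<And>t. t > 0 \<Longrightarrow> g t > 0"
    and xi_pos: "\<xi> > 0"
    and x_cont: "continuous_on {0..} x"
    and x_init: "x 0 = \<xi>"
    and x_ode: "\<And>t. t > 0 \<Longrightarrow> (x has_real_derivative (- f (x t) + g t)) (at t)"
    and delta_pos: "\<delta> > 0"
    and phi_mono: "mono_on {0<..<\<delta>} \<phi>"
    and f_phi: "((\<lambda>y. f y / \<phi> y) \<longlongrightarrow> 1) (at_right 0)"
    and L_pos: "L > 0"
    and g_lim: "((\<lambda>t. g t / f (Finv f t)) \<longlongrightarrow> L) at_top"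
begin

lemma x_pos: assumes "t \<ge> 0" shows "x t > 0"
proof (rule ccontr)
  assume "\<not> x t > 0"
  then have xt: "- x t \<ge> 0" by simp
  have cont: "continuous_on {0..t} (\<lambda>u. - x u)"
    by (intro continuous_intros continuous_on_subset[OF x_cont]) auto
  obtain s where s: "0 < s" "s \<le> t" "- x s \<ge> 0" "\<And>u. 0 \<le> u \<Longrightarrow> u < s \<Longrightarrow> - x u < 0"
    using first_hit[OF cont _ xt assms] xi_pos x_init by force
  have fx: "f (x s) \<le> 0"
  proof (cases "x s = 0")
    case True then show ?thesis using f0 by simp
  next
    case False then show ?thesis using f_neg[of "x s"] s(3) by simp
  qed
  have "- f (x s) + g s > 0" using fx g_pos[OF s(1)] by simp
  from DERIV_pos_inc_left[OF x_ode[OF s(1)] this] obtain d where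
    d: "d > 0" "\<And>h. h > 0 \<Longrightarrow> h < d \<Longrightarrow> x (s - h) < x s" by force
  define h where "h = min d s / 2"
  have h: "h > 0" "h < d" "h \<le> s" using d s by (auto simp: h_def)
  have "x (s - h) < x s" using d h by auto
  moreover have "- x (s - h) < 0" using s(4)[of "s - h"] h by auto
  ultimately show False using s(3) by linarith
qed

abbreviation h where "h t \<equiv> f (Finv f t)"

lemma h_pos: "t \<ge> 0 \<Longrightarrow> h t > 0"
  using f_pos Finv_pos by blast

lemma Finv_tendsto: "(Finv f \<longlongrightarrow> 0) at_top"
  using Finv_at_right by (simp add: filterlim_at)

lemma h_tendsto: "(h \<longlongrightarrow> 0) at_top"
proof -
  have "isCont f 0" using f_cont by (simp add: continuous_on_eq_continuous_at)
  from isCont_tendsto_compose[OF this Finv_tendsto] show ?thesis by (simp add: f0)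
qed

lemma g_bound: "eventually (\<lambda>t. g t \<le> (L + 1) * h t) at_top"
proof -
  have "eventually (\<lambda>t. g t / h t < L + 1) at_top"
    using g_lim by (rule order_tendstoD) simp
  moreover have "eventually (\<lambda>t. (t::real) \<ge> 0) at_top" by (auto simp: eventually_at_top_linorder)
  ultimately show ?thesis
  proof eventually_elim
    case (elim t)
    then show ?case using h_pos[of t] by (simp add: divide_less_eq less_imp_le)
  qed
qed

lemma x_bounded: "\<exists>M T. T > 0 \<and> (\<forall>t\<ge>T. x t \<le> M)"
proof -
  obtain N where N: "\<And>t. t \<ge> N \<Longrightarrow> g t \<le> (L + 1) * h t"
    using g_bound by (auto simp: eventually_at_top_linorder)
  define T where "T = max N 1"
  have T: "T > 0" "T \<ge> N" by (auto simp: T_def)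
  define z where "z t = x t + (L + 1) * Finv f t" for t
  have "x t \<le> z T" if t: "t \<ge> T" for t
  proof -
    have "z t \<le> z T"
    proof (rule DERIV_nonpos_imp_nonincreasing[OF t])
      fix u assume u: "T \<le> u" "u \<le> t"
      then have u0: "u > 0" using T by simp
      have "(z has_real_derivative (- f (x u) + g u) + (L + 1) * (- h u)) (at u)"
        unfolding z_def by (rule DERIV_add[OF x_ode[OF u0] DERIV_cmult[OF Finv_deriv[OF u0]]])
      moreover have "(- f (x u) + g u) + (L + 1) * (- h u) \<le> 0"
        using N[of u] u T f_pos[OF x_pos[of u]] u0 by simp
      ultimately show "\<exists>y. (z has_real_derivative y) (at u) \<and> y \<le> 0" by blast
    qed
    moreover have "x t \<le> z t" using Finv_pos[of t] T t L_pos by (simp add: z_def)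
    ultimately show ?thesis by simp
  qed
  then show ?thesis using T by blast
qed

lemma x_tendsto: "(x \<longlongrightarrow> 0) at_top"
proof (rule order_tendstoI)
  fix a :: real assume "a < 0"
  show "eventually (\<lambda>t. a < x t) at_top"
    using eventually_ge_at_top[of 0] by eventually_elim (use x_pos \<open>a < 0\<close> in force)
next
  fix a :: real assume a: "0 < a"
  obtain M T where MT: "T > 0" "\<And>t. t \<ge> T \<Longrightarrow> x t \<le> M" using x_bounded by blast
  define M' where "M' = max a M"
  have "continuous_on {a..M'} f" using f_cont by (rule continuous_on_subset) simp
  then obtain p where p: "p \<in> {a..M'}" "\<And>y. y \<in> {a..M'} \<Longrightarrow> f p \<le> f y"
    using continuous_attains_inf[of "{a..M'}" f] by (auto simp: M'_def)
  define m where "m = f p"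
  have m: "m > 0" using p a f_pos[of p] by (auto simp: m_def)
  have "eventually (\<lambda>t. (L + 1) * h t < m / 2) at_top"
  proof -
    have "((\<lambda>t. (L + 1) * h t) \<longlongrightarrow> (L + 1) * 0) at_top"
      by (intro tendsto_intros h_tendsto)
    then show ?thesis using m by (intro order_tendstoD) auto
  qed
  with g_bound have "eventually (\<lambda>t. g t < m / 2) at_top"
    by eventually_elim simp
  then obtain N where N: "\<And>t. t \<ge> N \<Longrightarrow> g t < m / 2"
    by (auto simp: eventually_at_top_linorder)
  define T2 where "T2 = max N T"
  have "\<exists>T'. \<forall>t\<ge>T'. x t - a < 0"
  proof (rule barrier[where c="m/2" and T=T2 and w'="\<lambda>t. - f (x t) + g t"])
    show "m / 2 > 0" using m by simp
  next
    fix t assume "T2 \<le> t"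
    then have "t > 0" using MT by (simp add: T2_def)
    then show "((\<lambda>t. x t - a) has_real_derivative - f (x t) + g t) (at t)"
      using DERIV_diff[OF x_ode[of t] DERIV_const[of a]] by simp
  next
    fix t assume t: "T2 \<le> t" "0 \<le> x t - a"
    then have "x t \<in> {a..M'}" using MT(2)[of t] by (auto simp: T2_def M'_def)
    then have "f (x t) \<ge> m" using p by (simp add: m_def)
    moreover have "g t < m / 2" using N t by (simp add: T2_def)
    ultimately show "- f (x t) + g t \<le> - (m / 2)" by simp
  qed
  then show "eventually (\<lambda>t. x t < a) at_top"
    by (auto simp: eventually_at_top_linorder)
qed

lemma x_ev_pos: "eventually (\<lambda>t. x t > 0) at_top"
  using eventually_ge_at_top[of "0::real"] by eventually_elim (rule x_pos)

lemma x_at_right: "filterlim x (at_right 0) at_top"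
  by (intro tendsto_imp_filterlim_at_right x_tendsto x_ev_pos)

lemma y_at_top: "filterlim (\<lambda>t. Fint f (x t)) at_top at_top"
  by (rule filterlim_compose[OF F_lim x_at_right])

lemma y_deriv: assumes t: "t > 0"
  shows "((\<lambda>t. Fint f (x t)) has_real_derivative 1 - g t / f (x t)) (at t)"
proof -
  have xt: "f (x t) > 0" using f_pos x_pos t by simp
  have "((\<lambda>t. Fint f (x t)) has_real_derivative (- (1 / f (x t))) * (- f (x t) + g t)) (at t)"
    by (rule DERIV_chain2[OF F_deriv x_ode]) (use t x_pos in auto)
  also have "(- (1 / f (x t))) * (- f (x t) + g t) = 1 - g t / f (x t)"
    using xt by (simp add: field_simps)
  finally show ?thesis .
qed

lemma x_eq: "t \<ge> 0 \<Longrightarrow> Finv f (Fint f (x t)) = x t"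
  using Finv_F x_pos by blast

lemma qm: assumes K: "K > 1"
  shows "\<exists>d>0. \<forall>a b. 0 < a \<longrightarrow> a \<le> b \<longrightarrow> b < d \<longrightarrow> f a \<le> K * f b"
proof -
  define k where "k = sqrt K"
  have k: "k > 1" "k * k = K" using K by (auto simp: k_def)
  have "eventually (\<lambda>y. f y / \<phi> y > 1 / k) (at_right 0)"
    using f_phi by (rule order_tendstoD) (use k in simp)
  moreover have "eventually (\<lambda>y. f y / \<phi> y < k) (at_right 0)"
    using f_phi by (rule order_tendstoD) (use k in simp)
  ultimately have "eventually (\<lambda>y. f y / \<phi> y > 1 / k \<and> f y / \<phi> y < k) (at_right 0)"
    by eventually_elim auto
  then obtain b0 where b0: "b0 > 0" "\<And>y. 0 < y \<Longrightarrow> y < b0 \<Longrightarrow> f y / \<phi> y > 1 / k \<and> f y / \<phi> y < k"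
    by (auto simp: eventually_at_right_field)
  have phipos: "\<phi> y > 0" and r1: "f y < k * \<phi> y" and r2: "\<phi> y < k * f y" if "0 < y" "y < b0" for y
  proof -
    have fy: "f y > 0" using f_pos that by simp
    have q: "f y / \<phi> y > 1 / k" "f y / \<phi> y < k" using b0 that by auto
    have "1 / k > 0" using k by simp
    show pp: "\<phi> y > 0"
    proof (rule ccontr)
      assume "\<not> \<phi> y > 0"
      then have "f y / \<phi> y \<le> 0" using fy by (simp add: divide_nonneg_nonpos)
      with q \<open>1/k > 0\<close> show False by simp
    qed
    show "f y < k * \<phi> y" using q(2) pp by (simp add: divide_less_eq)
    show "\<phi> y < k * f y" using q(1) pp k by (simp add: field_simps)
  qed
  define d where "d = min b0 \<delta>"
  have "\<forall>a b. 0 < a \<longrightarrow> a \<le> b \<longrightarrow> b < d \<longrightarrow> f a \<le> K * f b"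
  proof (intro allI impI)
    fix a b assume ab: "0 < a" "a \<le> b" "b < d"
    then have ab': "a < b0" "b < b0" "a < \<delta>" "b < \<delta>" by (auto simp: d_def)
    have "\<phi> a \<le> \<phi> b" using mono_onD[OF phi_mono, of a b] ab ab' by auto
    then have "f a < k * \<phi> b" using r1[of a] ab ab' k
      by (smt (verit) mult_left_mono)
    also have "k * \<phi> b \<le> k * (k * f b)" using r2[of b] ab ab' k by simp
    finally show "f a \<le> K * f b" using k by (simp add: mult.assoc[symmetric])
  qed
  moreover have "d > 0" using b0 delta_pos by (simp add: d_def)
  ultimately show ?thesis by blast
qed

end

context ode
begin

lemma q_tendsto:
  assumes lam: "lam > 0"
    and hRV: "((\<lambda>t. h (lam * t) / h t) \<longlongrightarrow> lam powr (- \<rho>)) at_top"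
  shows "((\<lambda>t. g t / h (lam * t)) \<longlongrightarrow> L * lam powr \<rho>) at_top"
proof -
  have l1: "((\<lambda>t. (g t / h t) / (h (lam * t) / h t)) \<longlongrightarrow> L / lam powr (- \<rho>)) at_top"
  proof (rule tendsto_divide[OF g_lim hRV])
    show "lam powr (- \<rho>) \<noteq> 0" using lam by simp
  qed
  have e1: "L / lam powr (- \<rho>) = L * lam powr \<rho>" using lam by (simp add: powr_minus divide_inverse)
  have ev: "eventually (\<lambda>t. (g t / h t) / (h (lam * t) / h t) = g t / h (lam * t)) at_top"
    using eventually_ge_at_top[of "0::real"]
  proof eventually_elim
    case (elim t)
    then have "h t > 0" by (rule h_pos)
    then show ?case by simp
  qed
  show ?thesis using Lim_transform_eventually[OF l1 ev] e1 by simp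
qed

lemma Finv_small: assumes "lam > 0" "d > 0"
  shows "eventually (\<lambda>t. Finv f (lam * t) < d) at_top"
proof -
  have "eventually (\<lambda>s. Finv f s < d) at_top"
    using Finv_tendsto by (rule order_tendstoD) (use assms in simp)
  then obtain S where S: "\<And>s. s \<ge> S \<Longrightarrow> Finv f s < d" by (auto simp: eventually_at_top_linorder)
  have "eventually (\<lambda>t. t \<ge> S / lam) at_top" by (rule eventually_ge_at_top)
  then show ?thesis
  proof eventually_elim
    case (elim t)
    then have "lam * t \<ge> S" using assms by (simp add: divide_le_eq mult.commute)
    then show ?case by (rule S)
  qed
qed

lemma upper:
  assumes rho: "\<rho> > 0" and Lam: "\<Lambda> > 0" "\<Lambda> + L * \<Lambda> powr \<rho> = 1"
    and lam: "lam > \<Lambda>"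
    and hRV: "((\<lambda>t. h (lam * t) / h t) \<longlongrightarrow> lam powr (- \<rho>)) at_top"
  shows "eventually (\<lambda>t. Fint f (x t) < lam * t) at_top"
proof -
  define A where "A = L * lam powr \<rho>"
  have "\<Lambda> powr \<rho> < lam powr \<rho>" using Lam lam rho by (intro powr_less_mono2) auto
  then have "L * \<Lambda> powr \<rho> < A" using L_pos by (simp add: A_def)
  define d where "d = lam + A - 1"
  have d: "d > 0" using Lam \<open>L * \<Lambda> powr \<rho> < A\<close> lam by (simp add: d_def)
  have A: "A > 0" using L_pos lam Lam by (simp add: A_def)
  define B where "B = max (A - d/2) (A/2)"
  have B: "0 < B" "B < A" "A - d/2 \<le> B" using A d by (auto simp: B_def)
  define K where "K = sqrt (A / B)"
  have K: "K > 1" "K * K = A / B" using B by (auto simp: K_def)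
  have "A / K < A" using K A by (simp add: divide_less_eq)
  have ev1: "eventually (\<lambda>t. g t / h (lam * t) > A / K) at_top"
    using q_tendsto[OF _ hRV] lam Lam \<open>A / K < A\<close> unfolding A_def
    by (intro order_tendstoD) auto
  obtain d0 where d0: "d0 > 0" "\<And>a b. 0 < a \<Longrightarrow> a \<le> b \<Longrightarrow> b < d0 \<Longrightarrow> f a \<le> K * f b"
    using qm[OF K(1)] by blast
  have ev2: "eventually (\<lambda>t. Finv f (lam * t) < d0) at_top"
    using Finv_small[of lam d0] lam Lam d0 by simp
  have ev3: "eventually (\<lambda>t. (t::real) \<ge> 1) at_top" by (rule eventually_ge_at_top)
  obtain T where T: "\<And>t. t \<ge> T \<Longrightarrow> g t / h (lam * t) > A / K \<and> Finv f (lam * t) < d0 \<and> t \<ge> 1"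
    using eventually_conj[OF ev1 eventually_conj[OF ev2 ev3]] by (auto simp: eventually_at_top_linorder)
  have "\<exists>T'. \<forall>t\<ge>T'. Fint f (x t) - lam * t < 0"
  proof (rule barrier[where c="d/2" and T=T and w'="\<lambda>t. (1 - g t / f (x t)) - lam"])
    show "d / 2 > 0" using d by simp
  next
    fix t assume "T \<le> t"
    then have "t > 0" using T[of t] by simp
    then show "((\<lambda>t. Fint f (x t) - lam * t) has_real_derivative (1 - g t / f (x t)) - lam) (at t)"
      using DERIV_diff[OF y_deriv[of t] DERIV_cmult_Id[of lam]] by simp
  next
    fix t assume t: "T \<le> t" "0 \<le> Fint f (x t) - lam * t"
    have t1: "t \<ge> 1" and q: "g t / h (lam * t) > A / K" and fd: "Finv f (lam * t) < d0"
      using T[OF t(1)] by auto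
    have lt0: "lam * t \<ge> 0" using t1 lam Lam by simp
    have "x t \<le> Finv f (lam * t)"
      using Finv_mono[OF lt0, of "Fint f (x t)"] t x_eq[of t] t1 by simp
    then have fx: "f (x t) \<le> K * h (lam * t)"
      using d0(2)[of "x t" "Finv f (lam * t)"] x_pos[of t] t1 fd by simp
    have fxp: "f (x t) > 0" using f_pos x_pos t1 by simp
    have hp: "h (lam * t) > 0" using h_pos lt0 by simp
    have gp: "g t > 0" using g_pos t1 by simp
    have "g t / (K * h (lam * t)) \<le> g t / f (x t)"
      using fx fxp gp by (intro divide_left_mono) auto
    moreover have "g t / (K * h (lam * t)) = (g t / h (lam * t)) / K" by simp
    moreover have "(g t / h (lam * t)) / K > (A / K) / K" by (rule divide_strict_right_mono[OF q]) (use K in linarith)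
    moreover have "(A / K) / K = B" using K B by (simp add: field_simps)
    ultimately have "g t / f (x t) > B" by linarith
    then show "(1 - g t / f (x t)) - lam \<le> - (d / 2)" using B d_def by linarith
  qed
  then show ?thesis by (auto simp: eventually_at_top_linorder)
qed

lemma lower:
  assumes rho: "\<rho> > 0" and Lam: "\<Lambda> > 0" "\<Lambda> + L * \<Lambda> powr \<rho> = 1"
    and lam: "lam > 0" "lam < \<Lambda>"
    and hRV: "((\<lambda>t. h (lam * t) / h t) \<longlongrightarrow> lam powr (- \<rho>)) at_top"
  shows "eventually (\<lambda>t. lam * t < Fint f (x t)) at_top"
proof -
  define A where "A = L * lam powr \<rho>"
  have "lam powr \<rho> < \<Lambda> powr \<rho>" using Lam lam rho by (intro powr_less_mono2) auto
  then have "A < L * \<Lambda> powr \<rho>" using L_pos by (simp add: A_def)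
  define d where "d = 1 - lam - A"
  have d: "d > 0" using Lam \<open>A < L * \<Lambda> powr \<rho>\<close> lam by (simp add: d_def)
  have A: "A > 0" using L_pos lam by (simp add: A_def)
  define K where "K = sqrt ((A + d/2) / A)"
  have K: "K > 1" "K * K = (A + d/2) / A" using A d by (auto simp: K_def)
  have "A < A * K" using K A by simp
  have ev1: "eventually (\<lambda>t. g t / h (lam * t) < A * K) at_top"
    using q_tendsto[OF _ hRV] lam \<open>A < A * K\<close> unfolding A_def
    by (intro order_tendstoD) auto
  obtain d0 where d0: "d0 > 0" "\<And>a b. 0 < a \<Longrightarrow> a \<le> b \<Longrightarrow> b < d0 \<Longrightarrow> f a \<le> K * f b"
    using qm[OF K(1)] by blast
  have ev2: "eventually (\<lambda>t. Finv f (lam * t) < d0) at_top"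
    using Finv_small[of lam d0] lam d0 by simp
  have ev3: "eventually (\<lambda>t. (t::real) \<ge> 1) at_top" by (rule eventually_ge_at_top)
  have ev4: "eventually (\<lambda>t. x t < d0) at_top"
    using x_tendsto by (rule order_tendstoD) (use d0 in simp)
  have ev5: "eventually (\<lambda>t. Fint f (x t) \<ge> 0) at_top"
    using y_at_top by (simp add: filterlim_at_top)
  obtain T where T: "\<And>t. t \<ge> T \<Longrightarrow> g t / h (lam * t) < A * K \<and> Finv f (lam * t) < d0 \<and> t \<ge> 1
       \<and> x t < d0 \<and> Fint f (x t) \<ge> 0"
    using eventually_conj[OF ev1 eventually_conj[OF ev2 eventually_conj[OF ev3 eventually_conj[OF ev4 ev5]]]]
    by (auto simp: eventually_at_top_linorder)
  have "\<exists>T'. \<forall>t\<ge>T'. lam * t - Fint f (x t) < 0"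
  proof (rule barrier[where c="d/2" and T=T and w'="\<lambda>t. lam - (1 - g t / f (x t))"])
    show "d / 2 > 0" using d by simp
  next
    fix t assume "T \<le> t"
    then have "t > 0" using T[of t] by simp
    then show "((\<lambda>t. lam * t - Fint f (x t)) has_real_derivative lam - (1 - g t / f (x t))) (at t)"
      using DERIV_diff[OF DERIV_cmult_Id[of lam] y_deriv[of t]] by simp
  next
    fix t assume t: "T \<le> t" "0 \<le> lam * t - Fint f (x t)"
    have t1: "t \<ge> 1" and q: "g t / h (lam * t) < A * K" and fd: "Finv f (lam * t) < d0"
      and xd: "x t < d0" and y0: "Fint f (x t) \<ge> 0"
      using T[OF t(1)] by auto
    have lt0: "lam * t \<ge> 0" using t1 lam by simp
    have "Finv f (lam * t) \<le> x t"
      using Finv_mono[OF y0, of "lam * t"] t x_eq[of t] t1 by simp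
    then have fx: "h (lam * t) \<le> K * f (x t)"
      using d0(2)[of "Finv f (lam * t)" "x t"] Finv_pos[OF lt0] xd by simp
    have fxp: "f (x t) > 0" using f_pos x_pos t1 by simp
    have hp: "h (lam * t) > 0" using h_pos lt0 by simp
    have gp: "g t > 0" using g_pos t1 by simp
    have "g t / f (x t) \<le> g t / (h (lam * t) / K)"
      using fx fxp gp hp K by (intro divide_left_mono) (auto simp: field_simps)
    moreover have "g t / (h (lam * t) / K) = (g t / h (lam * t)) * K" by simp
    moreover have "(g t / h (lam * t)) * K < (A * K) * K" by (rule mult_strict_right_mono[OF q]) (use K in linarith)
    moreover have "(A * K) * K = A + d/2" using K A by (simp add: field_simps)
    ultimately have "g t / f (x t) < A + d/2" by linarith
    then show "lam - (1 - g t / f (x t)) \<le> - (d / 2)" using d_def by linarith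
  qed
  then show ?thesis by (auto simp: eventually_at_top_linorder)
qed

lemma main:
  assumes rho: "\<rho> > 0" and Lam: "\<Lambda> > 0" "\<Lambda> + L * \<Lambda> powr \<rho> = 1"
    and hRV: "\<And>\<mu>. \<mu> > 0 \<Longrightarrow> ((\<lambda>t. h (\<mu> * t) / h t) \<longlongrightarrow> \<mu> powr (- \<rho>)) at_top"
  shows "((\<lambda>t. Fint f (x t) / t) \<longlongrightarrow> \<Lambda>) at_top"
proof (rule order_tendstoI)
  fix a assume a: "a > \<Lambda>"
  have "eventually (\<lambda>t. Fint f (x t) < a * t) at_top"
    using upper[OF rho Lam a hRV] a Lam by simp
  moreover have "eventually (\<lambda>t. t > (0::real)) at_top" by (rule eventually_gt_at_top)
  ultimately show "eventually (\<lambda>t. Fint f (x t) / t < a) at_top"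
    by eventually_elim (simp add: divide_less_eq)
next
  fix a assume a: "a < \<Lambda>"
  have "eventually (\<lambda>t. a * t < Fint f (x t)) at_top"
  proof (cases "a > 0")
    case True then show ?thesis using lower[OF rho Lam True a hRV] by simp
  next
    case False
    have "eventually (\<lambda>t. Fint f (x t) > 0) at_top"
      using y_at_top by (simp add: filterlim_at_top_dense)
    moreover have "eventually (\<lambda>t. t > (0::real)) at_top" by (rule eventually_gt_at_top)
    ultimately show ?thesis
      by eventually_elim (use False in \<open>smt (verit) mult_nonpos_nonneg\<close>)
  qed
  moreover have "eventually (\<lambda>t. t > (0::real)) at_top" by (rule eventually_gt_at_top)
  ultimately show "eventually (\<lambda>t. a < Fint f (x t) / t) at_top"
    by eventually_elim (simp add: less_divide_eq)
qed

end

context ode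
begin

lemma ev_right_pos: "eventually (\<lambda>s. s > (0::real)) (at_right 0)"
  by (simp add: eventually_at_right_less)

lemma F_ratio:
  assumes beta: "\<beta> > 1" and RV: "RV0 f \<beta>" and k: "\<kappa> > 0"
  shows "((\<lambda>s. Fint f (\<kappa> * s) / Fint f s) \<longlongrightarrow> \<kappa> powr (1 - \<beta>)) (at_right 0)"
proof (rule lhopital_right_0_at_top[where g' = "\<lambda>s. - (1 / f s)" and f' = "\<lambda>s. - (1 / f (\<kappa> * s)) * \<kappa>"])
  show "LIM s at_right 0. Fint f s :> at_top" by (rule F_lim)
  show "eventually (\<lambda>s. - (1 / f s) \<noteq> 0) (at_right 0)"
    using ev_right_pos by eventually_elim (use f_pos in force)
  show "eventually (\<lambda>s. (Fint f has_real_derivative - (1 / f s)) (at s)) (at_right 0)"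
    using ev_right_pos by eventually_elim (rule F_deriv)
  show "eventually (\<lambda>s. ((\<lambda>s. Fint f (\<kappa> * s)) has_real_derivative - (1 / f (\<kappa> * s)) * \<kappa>) (at s)) (at_right 0)"
    using ev_right_pos
  proof eventually_elim
    case (elim s)
    then have "\<kappa> * s > 0" using k by simp
    then show ?case by (rule DERIV_chain2[OF F_deriv DERIV_cmult_Id])
  qed
  have lim: "((\<lambda>s. f (\<kappa> * s) / f s) \<longlongrightarrow> \<kappa> powr \<beta>) (at_right 0)"
    using RV k by (simp add: RV0_def)
  have "((\<lambda>s. \<kappa> * inverse (f (\<kappa> * s) / f s)) \<longlongrightarrow> \<kappa> * inverse (\<kappa> powr \<beta>)) (at_right 0)"
    using k by (intro tendsto_intros lim) simp
  moreover have "\<kappa> * inverse (\<kappa> powr \<beta>) = \<kappa> powr (1 - \<beta>)"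
    using k by (simp add: powr_diff divide_inverse)
  moreover have "eventually (\<lambda>s. \<kappa> * inverse (f (\<kappa> * s) / f s) = (- (1 / f (\<kappa> * s)) * \<kappa>) / (- (1 / f s))) (at_right 0)"
    using ev_right_pos
  proof eventually_elim
    case (elim s)
    then have "f s > 0" "f (\<kappa> * s) > 0" using f_pos k by auto
    then show ?case by (simp add: field_simps)
  qed
  ultimately show "((\<lambda>s. (- (1 / f (\<kappa> * s)) * \<kappa>) / (- (1 / f s))) \<longlongrightarrow> \<kappa> powr (1 - \<beta>)) (at_right 0)"
    using Lim_transform_eventually by fastforce
qed

lemma ev_compose_Finv:
  assumes "eventually P (at_right 0)"
  shows "eventually (\<lambda>t. P (Finv f t)) at_top"
  using Finv_at_right assms by (simp add: filterlim_iff)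

lemma Finv_ratio:
  assumes beta: "\<beta> > 1" and RV: "RV0 f \<beta>" and mu: "\<mu> > 0"
  shows "((\<lambda>t. Finv f (\<mu> * t) / Finv f t) \<longlongrightarrow> \<mu> powr (- 1 / (\<beta> - 1))) at_top"
proof -
  define \<kappa> where "\<kappa> = \<mu> powr (- 1 / (\<beta> - 1))"
  have k: "\<kappa> > 0" using mu by (simp add: \<kappa>_def)
  have kmu: "\<kappa> powr (1 - \<beta>) = \<mu>"
  proof -
    have "\<kappa> powr (1 - \<beta>) = \<mu> powr ((- 1 / (\<beta> - 1)) * (1 - \<beta>))"
      by (simp add: \<kappa>_def powr_powr)
    also have "(- 1 / (\<beta> - 1)) * (1 - \<beta>) = 1" using beta by (simp add: field_simps)
    finally show ?thesis using mu by simp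
  qed
  have tpos: "eventually (\<lambda>t. t > (0::real)) at_top" by (rule eventually_gt_at_top)
  have key: "Fint f (a * Finv f t) < Fint f (Finv f (\<mu> * t)) \<longleftrightarrow> Finv f (\<mu> * t) < a * Finv f t"
    if "a > 0" "t > 0" for a t
    using F_less_iff[of "Finv f (\<mu> * t)" "a * Finv f t"] Finv_pos[of t] Finv_pos[of "\<mu> * t"] that mu
    by auto
  show ?thesis unfolding \<kappa>_def[symmetric]
  proof (rule order_tendstoI)
    fix a assume a: "a > \<kappa>"
    then have apos: "a > 0" using k by simp
    have "a powr (1 - \<beta>) < \<kappa> powr (1 - \<beta>)"
      by (rule powr_less_mono2_neg) (use beta k a in auto)
    then have "eventually (\<lambda>s. Fint f (a * s) / Fint f s < \<mu>) (at_right 0)"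
      using F_ratio[OF beta RV apos] kmu by (intro order_tendstoD) auto
    from ev_compose_Finv[OF this] tpos
    show "eventually (\<lambda>t. Finv f (\<mu> * t) / Finv f t < a) at_top"
    proof eventually_elim
      case (elim t)
      have Ft: "Fint f (Finv f t) = t" using F_Finv elim by simp
      have "Fint f (a * Finv f t) < \<mu> * t"
        using elim Ft by (simp add: divide_less_eq)
      also have "\<mu> * t = Fint f (Finv f (\<mu> * t))" using F_Finv mu elim by simp
      finally have "Finv f (\<mu> * t) < a * Finv f t" using key apos elim by blast
      then show ?case using Finv_pos[of t] elim by (simp add: divide_less_eq)
    qed
  next
    fix a assume a: "a < \<kappa>"
    show "eventually (\<lambda>t. a < Finv f (\<mu> * t) / Finv f t) at_top"
    proof (cases "a > 0")
      case False
      show ?thesis using tpos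
      proof eventually_elim
        case (elim t)
        have "Finv f (\<mu> * t) / Finv f t > 0" using Finv_pos mu elim by simp
        then show ?case using False by simp
      qed
    next
      case apos: True
      have "\<kappa> powr (1 - \<beta>) < a powr (1 - \<beta>)"
        by (rule powr_less_mono2_neg) (use beta k a apos in auto)
      then have "eventually (\<lambda>s. Fint f (a * s) / Fint f s > \<mu>) (at_right 0)"
        using F_ratio[OF beta RV apos] kmu by (intro order_tendstoD) auto
      from ev_compose_Finv[OF this] tpos
      show ?thesis
      proof eventually_elim
        case (elim t)
        have Ft: "Fint f (Finv f t) = t" using F_Finv elim by simp
        have "\<mu> * t < Fint f (a * Finv f t)"
          using elim Ft by (simp add: less_divide_eq)
        then have "Fint f (Finv f (\<mu> * t)) < Fint f (a * Finv f t)" using F_Finv mu elim by simp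
        then have "a * Finv f t < Finv f (\<mu> * t)"
          using F_less_iff[of "a * Finv f t" "Finv f (\<mu> * t)"] Finv_pos[of t] Finv_pos[of "\<mu> * t"] apos mu elim
          by auto
        then show ?case using Finv_pos[of t] elim by (simp add: less_divide_eq)
      qed
    qed
  qed
qed

end

context ode
begin

lemma sqrt_lt_self: "r > 1 \<Longrightarrow> sqrt r < (r::real)"
proof -
  assume r: "r > 1"
  have s1: "sqrt r > 1" using r by simp
  have "sqrt r * 1 < sqrt r * sqrt r" by (rule mult_strict_left_mono[OF s1]) (use s1 in simp)
  also have "sqrt r * sqrt r = r" using r by simp
  finally show ?thesis by simp
qed

lemma RV_compose:
  assumes RV: "RV0 f \<beta>" and s: "s > 0"
  shows "((\<lambda>t. f (s * Finv f t) / f (Finv f t)) \<longlongrightarrow> s powr \<beta>) at_top"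
proof -
  have "((\<lambda>y. f (s * y) / f y) \<longlongrightarrow> s powr \<beta>) (at_right 0)" using RV s by (simp add: RV0_def)
  from filterlim_compose[OF this Finv_at_right] show ?thesis by simp
qed

lemma h_ratio:
  assumes beta: "\<beta> > 1" and RV: "RV0 f \<beta>" and mu: "\<mu> > 0"
  shows "((\<lambda>t. h (\<mu> * t) / h t) \<longlongrightarrow> \<mu> powr (- (\<beta> / (\<beta> - 1)))) at_top"
proof -
  define \<kappa> where "\<kappa> = \<mu> powr (- 1 / (\<beta> - 1))"
  have k: "\<kappa> > 0" using mu by (simp add: \<kappa>_def)
  have nu: "\<kappa> powr \<beta> = \<mu> powr (- (\<beta> / (\<beta> - 1)))"
  proof -
    have "\<kappa> powr \<beta> = \<mu> powr ((- 1 / (\<beta> - 1)) * \<beta>)"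
      by (simp add: \<kappa>_def powr_powr)
    also have "(- 1 / (\<beta> - 1)) * \<beta> = - (\<beta> / (\<beta> - 1))" by (simp add: field_simps)
    finally show ?thesis .
  qed
  have bpos: "\<beta> > 0" using beta by simp
  have FR: "((\<lambda>t. Finv f (\<mu> * t) / Finv f t) \<longlongrightarrow> \<kappa>) at_top"
    unfolding \<kappa>_def by (rule Finv_ratio[OF beta RV mu])
  have tpos: "eventually (\<lambda>t. t \<ge> (0::real)) at_top" by (rule eventually_ge_at_top)
  have rootpow: "(a powr (1/\<beta>)) powr \<beta> = a" if "a > 0" for a
    using that bpos by (simp add: powr_powr)
  show ?thesis unfolding nu[symmetric]
  proof (rule order_tendstoI)
    fix a assume a: "a > \<kappa> powr \<beta>"
    have "\<kappa> powr \<beta> > 0" using k by simp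
    then have apos: "a > 0" using a by linarith
    have "\<kappa> < a powr (1/\<beta>)"
    proof -
      have "(\<kappa> powr \<beta>) powr (1/\<beta>) < a powr (1/\<beta>)"
        by (rule powr_less_mono2) (use a bpos k in auto)
      then show ?thesis using bpos k by (simp add: powr_powr)
    qed
    define s where "s = (\<kappa> + a powr (1/\<beta>)) / 2"
    have s: "s > \<kappa>" "s < a powr (1/\<beta>)" "s > 0" using \<open>\<kappa> < a powr (1/\<beta>)\<close> k by (auto simp: s_def)
    have "s powr \<beta> < (a powr (1/\<beta>)) powr \<beta>"
      by (rule powr_less_mono2) (use s bpos in auto)
    then have sa: "s powr \<beta> < a" using rootpow[OF apos] by simp
    define r where "r = a / s powr \<beta>"
    have r: "r > 1" using sa s by (simp add: r_def)
    define K where "K = sqrt (sqrt r)"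
    have K: "K > 1" "K * K = sqrt r" using r by (auto simp: K_def)
    have sqr: "sqrt r < r" using sqrt_lt_self[OF r] .
    obtain d0 where d0: "d0 > 0" "\<And>a b. 0 < a \<Longrightarrow> a \<le> b \<Longrightarrow> b < d0 \<Longrightarrow> f a \<le> K * f b"
      using qm[OF K(1)] by blast
    have E1: "eventually (\<lambda>t. Finv f (\<mu> * t) / Finv f t < s) at_top"
      using FR s(1) by (rule order_tendstoD(2))
    have spos: "s powr \<beta> > 0" using s by simp
    have E2: "eventually (\<lambda>t. f (s * Finv f t) / f (Finv f t) < K * s powr \<beta>) at_top"
      using RV_compose[OF RV s(3)] by (rule order_tendstoD(2)) (use K spos in simp)
    have E3: "eventually (\<lambda>t. Finv f t < d0 / s) at_top"
      using Finv_tendsto by (rule order_tendstoD(2)) (use d0 s in simp)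
    from E1 E2 E3 tpos show "eventually (\<lambda>t. h (\<mu> * t) / h t < a) at_top"
    proof eventually_elim
      case (elim t)
      have ft: "Finv f t > 0" using Finv_pos elim by simp
      have fb: "Finv f (\<mu> * t) > 0" using Finv_pos elim mu by simp
      have b1: "Finv f (\<mu> * t) < s * Finv f t" using elim ft by (simp add: divide_less_eq)
      have b2: "s * Finv f t < d0" using elim s by (simp add: less_divide_eq mult.commute)
      have "h (\<mu> * t) \<le> K * f (s * Finv f t)"
        using d0(2)[of "Finv f (\<mu> * t)" "s * Finv f t"] fb b1 b2 by simp
      then have "h (\<mu> * t) / h t \<le> K * (f (s * Finv f t) / h t)"
        using f_pos[OF ft] by (simp add: divide_right_mono)
      also have "\<dots> < K * (K * s powr \<beta>)"
        using elim K by (intro mult_strict_left_mono) auto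
      also have "K * (K * s powr \<beta>) = sqrt r * s powr \<beta>" using K by (simp add: mult.assoc[symmetric])
      also have "\<dots> < r * s powr \<beta>" using sqr spos by simp
      also have "r * s powr \<beta> = a" using spos by (simp add: r_def)
      finally show ?case .
    qed
  next
    fix a assume a: "a < \<kappa> powr \<beta>"
    show "eventually (\<lambda>t. a < h (\<mu> * t) / h t) at_top"
    proof (cases "a > 0")
      case False
      from tpos show ?thesis
      proof eventually_elim
        case (elim t)
        have "h (\<mu> * t) / h t > 0" using h_pos mu elim by simp
        then show ?case using False by simp
      qed
    next
      case apos: True
      have "a powr (1/\<beta>) < \<kappa>"
      proof -
        have "a powr (1/\<beta>) < (\<kappa> powr \<beta>) powr (1/\<beta>)"
          by (rule powr_less_mono2) (use a bpos apos in auto)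
        then show ?thesis using bpos k by (simp add: powr_powr)
      qed
      have pp: "a powr (1/\<beta>) > 0" using apos by simp
      define p where "p = a powr (1/\<beta>)"
      have p: "p > 0" "p < \<kappa>" using pp \<open>a powr (1/\<beta>) < \<kappa>\<close> by (auto simp: p_def)
      define s where "s = (\<kappa> + p) / 2"
      have s: "s < \<kappa>" "s > p" "s > 0" using p unfolding s_def by auto
      have "(a powr (1/\<beta>)) powr \<beta> < s powr \<beta>"
        by (rule powr_less_mono2) (use s bpos apos p_def in auto)
      then have sa: "a < s powr \<beta>" using rootpow[OF apos] by simp
      define r where "r = s powr \<beta> / a"
      have r: "r > 1" using sa apos by (simp add: r_def)
      define K where "K = sqrt (sqrt r)"
      have K: "K > 1" "K * K = sqrt r" using r by (auto simp: K_def)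
      have sqr: "sqrt r < r" using sqrt_lt_self[OF r] .
      obtain d0 where d0: "d0 > 0" "\<And>a b. 0 < a \<Longrightarrow> a \<le> b \<Longrightarrow> b < d0 \<Longrightarrow> f a \<le> K * f b"
        using qm[OF K(1)] by blast
      have E1: "eventually (\<lambda>t. Finv f (\<mu> * t) / Finv f t > s) at_top"
        using FR s(1) by (rule order_tendstoD(1))
      have spos: "s powr \<beta> > 0" using s by simp
      have E2: "eventually (\<lambda>t. f (s * Finv f t) / f (Finv f t) > s powr \<beta> / K) at_top"
        using RV_compose[OF RV s(3)] by (rule order_tendstoD(1)) (use K spos in \<open>simp add: divide_less_eq\<close>)
      have E3: "eventually (\<lambda>t. Finv f (\<mu> * t) < d0) at_top"
        using Finv_small[OF mu d0(1)] .
      from E1 E2 E3 tpos show ?thesis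
      proof eventually_elim
        case (elim t)
        have ft: "Finv f t > 0" using Finv_pos elim by simp
        have sft: "s * Finv f t > 0" using ft s by simp
        have b1: "s * Finv f t < Finv f (\<mu> * t)" using elim ft by (simp add: less_divide_eq)
        have ht: "h t > 0" using f_pos[OF ft] .
        have "f (s * Finv f t) \<le> K * h (\<mu> * t)"
          using d0(2)[of "s * Finv f t" "Finv f (\<mu> * t)"] sft b1 elim by simp
        then have "f (s * Finv f t) / h t / K \<le> h (\<mu> * t) / h t"
          using ht K by (simp add: field_simps)
        have "a = s powr \<beta> / r" using apos spos by (simp add: r_def)
        also have "\<dots> < s powr \<beta> / sqrt r" using sqr spos r by (intro divide_strict_left_mono) auto
        also have "\<dots> = (s powr \<beta> / K) / K" using K by (simp add: field_simps)
        also have "\<dots> < f (s * Finv f t) / h t / K"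
          using elim K by (intro divide_strict_right_mono) auto
        also have "\<dots> \<le> h (\<mu> * t) / h t" by fact
        finally show ?case .
      qed
    qed
  qed
qed

lemma Lam_char:
  assumes "\<Lambda> > 0"
  shows "(1 - \<Lambda>) * \<Lambda> powr (- \<rho>) = L \<longleftrightarrow> \<Lambda> + L * \<Lambda> powr \<rho> = 1"
  using assms by (auto simp: powr_minus field_simps)

lemma Lam_exists:
  assumes rho: "\<rho> > 0"
  shows "\<exists>!\<Lambda>. 0 < \<Lambda> \<and> \<Lambda> < 1 \<and> (1 - \<Lambda>) * \<Lambda> powr (- \<rho>) = L"
proof -
  define q where "q z = z + L * z powr \<rho>" for z
  have mono: "q z1 < q z2" if "0 < z1" "z1 < z2" for z1 z2
  proof -
    have "z1 powr \<rho> < z2 powr \<rho>" by (rule powr_less_mono2) (use that rho in auto)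
    then have "L * z1 powr \<rho> < L * z2 powr \<rho>" using L_pos by simp
    then show ?thesis using that by (simp add: q_def)
  qed
  define z0 where "z0 = min (1/3) ((1 / (3 * L)) powr (1 / \<rho>))"
  have z0: "z0 > 0" "z0 \<le> 1/3" using L_pos by (auto simp: z0_def)
  have "z0 powr \<rho> \<le> ((1 / (3 * L)) powr (1 / \<rho>)) powr \<rho>"
  proof (rule powr_mono2)
    show "0 \<le> \<rho>" using rho by simp
    show "0 \<le> z0" using z0 by simp
    show "z0 \<le> (1 / (3 * L)) powr (1 / \<rho>)" unfolding z0_def by (rule min.cobounded2)
  qed
  also have "\<dots> = 1 / (3 * L)" using rho L_pos by (simp add: powr_powr)
  finally have "L * z0 powr \<rho> \<le> L * (1 / (3 * L))" using L_pos by (intro mult_left_mono) auto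
  then have qz0: "q z0 \<le> 1" using L_pos z0 by (simp add: q_def)
  have q1: "1 \<le> q 1" using L_pos by (simp add: q_def)
  have "\<exists>z\<ge>z0. z \<le> 1 \<and> q z = 1"
  proof (rule IVT[where f=q, OF qz0 q1])
    show "z0 \<le> 1" using z0 by simp
    have qeq: "q = (\<lambda>z. z + L * z powr \<rho>)" by (rule ext) (simp add: q_def)
    show "\<forall>z. z0 \<le> z \<and> z \<le> 1 \<longrightarrow> isCont q z"
      unfolding qeq using z0 by (auto intro!: continuous_intros)
  qed
  then obtain z where z: "z \<ge> z0" "z \<le> 1" "q z = 1" by blast
  have "z \<noteq> 1" using z L_pos by (auto simp: q_def)
  then have zz: "0 < z" "z < 1" using z z0 by auto
  show ?thesis
  proof (rule ex1I[of _ z])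
    show "0 < z \<and> z < 1 \<and> (1 - z) * z powr (- \<rho>) = L"
      using zz z Lam_char[of z] by (simp add: q_def)
  next
    fix w assume w: "0 < w \<and> w < 1 \<and> (1 - w) * w powr (- \<rho>) = L"
    then have qw: "q w = 1" using Lam_char[of w] by (simp add: q_def)
    show "w = z"
    proof (rule ccontr)
      assume "w \<noteq> z"
      then have "w < z \<or> z < w" by auto
      then show False using mono[of w z] mono[of z w] w zz qw z(3) by auto
    qed
  qed
qed

end

theorem theorem2:
  fixes f g x \<phi> :: "real \<Rightarrow> real" and \<xi> \<delta> L :: real
  assumes f_cont: "continuous_on UNIV f"
    and f_lip: "loc_lipschitz f"
    and f0: "f 0 = 0"
    and f_sign: "\<And>y. y \<noteq> 0 \<Longrightarrow> y * f y > 0"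
    and g_cont: "continuous_on {0..} g"
    and g_pos: "\<And>t. t > 0 \<Longrightarrow> g t > 0"
    and xi_pos: "\<xi> > 0"
    and F_lim: "filterlim (Fint f) at_top (at_right 0)"
    and x_cont: "continuous_on {0..} x"
    and x_init: "x 0 = \<xi>"
    and x_ode: "\<And>t. t > 0 \<Longrightarrow> (x has_real_derivative (- f (x t) + g t)) (at t)"
    and delta_pos: "\<delta> > 0"
    and phi_mono: "mono_on {0<..<\<delta>} \<phi>"
    and f_phi: "((\<lambda>y. f y / \<phi> y) \<longlongrightarrow> 1) (at_right 0)"
    and L_pos: "L > 0"
    and g_lim: "((\<lambda>t. g t / f (Finv f t)) \<longlongrightarrow> L) at_top"
  shows "(x \<longlongrightarrow> 0) at_top
    \<and> (\<forall>\<beta>. \<beta> > 1 \<and> RV0 f \<beta> \<longrightarrow>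
         (\<exists>!\<Lambda>. 0 < \<Lambda> \<and> \<Lambda> < 1 \<and> (1 - \<Lambda>) * \<Lambda> powr (- \<beta> / (\<beta> - 1)) = L)
         \<and> ((\<lambda>t. Fint f (x t) / t) \<longlongrightarrow>
              (THE \<Lambda>. 0 < \<Lambda> \<and> \<Lambda> < 1 \<and> (1 - \<Lambda>) * \<Lambda> powr (- \<beta> / (\<beta> - 1)) = L)) at_top)
    \<and> (RVinf (\<lambda>t. f (Finv f t)) (-1) \<and> RVinf (Finv f) 0 \<longrightarrow>
         ((\<lambda>t. Fint f (x t) / t) \<longlongrightarrow> 1 / (L + 1)) at_top)"
proof -
  interpret ode f g x \<phi> \<xi> \<delta> L
    by unfold_locales (fact f_cont f0 f_sign F_lim g_pos xi_pos x_cont x_init x_ode delta_pos phi_mono f_phi L_pos g_lim)+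
  have P0: "(x \<longlongrightarrow> 0) at_top" by (rule x_tendsto)
  have P1: "\<forall>\<beta>. \<beta> > 1 \<and> RV0 f \<beta> \<longrightarrow>
         (\<exists>!\<Lambda>. 0 < \<Lambda> \<and> \<Lambda> < 1 \<and> (1 - \<Lambda>) * \<Lambda> powr (- \<beta> / (\<beta> - 1)) = L)
         \<and> ((\<lambda>t. Fint f (x t) / t) \<longlongrightarrow>
              (THE \<Lambda>. 0 < \<Lambda> \<and> \<Lambda> < 1 \<and> (1 - \<Lambda>) * \<Lambda> powr (- \<beta> / (\<beta> - 1)) = L)) at_top"
  proof (intro allI impI, elim conjE)
    fix \<beta> :: real assume b: "\<beta> > 1" "RV0 f \<beta>"
    define \<rho> where "\<rho> = \<beta> / (\<beta> - 1)"
    have rho: "\<rho> > 0" using b by (simp add: \<rho>_def)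
    have eqv: "- \<beta> / (\<beta> - 1) = - \<rho>" by (simp add: \<rho>_def)
    have ex: "\<exists>!\<Lambda>. 0 < \<Lambda> \<and> \<Lambda> < 1 \<and> (1 - \<Lambda>) * \<Lambda> powr (- \<beta> / (\<beta> - 1)) = L"
      unfolding eqv by (rule Lam_exists[OF rho])
    define \<Lambda> where "\<Lambda> = (THE \<Lambda>. 0 < \<Lambda> \<and> \<Lambda> < 1 \<and> (1 - \<Lambda>) * \<Lambda> powr (- \<beta> / (\<beta> - 1)) = L)"
    have Lam: "0 < \<Lambda> \<and> \<Lambda> < 1 \<and> (1 - \<Lambda>) * \<Lambda> powr (- \<beta> / (\<beta> - 1)) = L"
      unfolding \<Lambda>_def by (rule theI'[OF ex])
    then have Lam2: "\<Lambda> + L * \<Lambda> powr \<rho> = 1" using Lam_char[of \<Lambda> \<rho>] eqv by simp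
    have hRV: "((\<lambda>t. h (\<mu> * t) / h t) \<longlongrightarrow> \<mu> powr (- \<rho>)) at_top" if "\<mu> > 0" for \<mu>
      using h_ratio[OF b that] by (simp add: \<rho>_def)
    have "((\<lambda>t. Fint f (x t) / t) \<longlongrightarrow> \<Lambda>) at_top"
      by (rule main[OF rho _ Lam2 hRV]) (use Lam in auto)
    then show "(\<exists>!\<Lambda>. 0 < \<Lambda> \<and> \<Lambda> < 1 \<and> (1 - \<Lambda>) * \<Lambda> powr (- \<beta> / (\<beta> - 1)) = L)
         \<and> ((\<lambda>t. Fint f (x t) / t) \<longlongrightarrow>
              (THE \<Lambda>. 0 < \<Lambda> \<and> \<Lambda> < 1 \<and> (1 - \<Lambda>) * \<Lambda> powr (- \<beta> / (\<beta> - 1)) = L)) at_top"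
      using ex unfolding \<Lambda>_def by blast
  qed
  have P2: "RVinf (\<lambda>t. f (Finv f t)) (-1) \<and> RVinf (Finv f) 0 \<longrightarrow>
         ((\<lambda>t. Fint f (x t) / t) \<longlongrightarrow> 1 / (L + 1)) at_top"
  proof
    assume "RVinf (\<lambda>t. f (Finv f t)) (-1) \<and> RVinf (Finv f) 0"
    then have hRV: "((\<lambda>t. h (\<mu> * t) / h t) \<longlongrightarrow> \<mu> powr (- 1)) at_top" if "\<mu> > 0" for \<mu>
      using that by (simp add: RVinf_def)
    have Lp: "1 / (L + 1) > 0" using L_pos by simp
    have "1 / (L + 1) + L * (1 / (L + 1)) powr 1 = 1"
      using L_pos by (simp add: powr_one field_simps)
    from main[OF _ Lp this hRV] show "((\<lambda>t. Fint f (x t) / t) \<longlongrightarrow> 1 / (L + 1)) at_top" by simp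
  qed
  show ?thesis using P0 P1 P2 by blast
qed

end
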